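(* Let $\ell\ge1$, $c>0$, let $h_1,\dots,h_\ell$ be i.i.d. $\mathcal{CN}(0,1)$, and for $x>0$ define $\psi_\ell(x)=\frac1x\Pr\left[\sum_{i=1}^{\ell}|h_i|^2>\frac{\ell c}{x}\right]$. Let $\phi_\ell(y)=\frac{y^\ell}{(\ell-1)!}-\sum_{i=0}^{\ell-1}\frac{y^i}{i!}$. Then $\phi_\ell$ has a unique positive root $y_\ell$, which satisfies $y_\ell\le\ell$; the function $\psi_\ell$ is increasing on $(0,x_\ell]$ and decreasing on $[x_\ell,\infty)$, where $x_\ell=\ell c/y_\ell\ge c$. *)

theory Defs
  imports "HOL-Probability.Probability"
begin

text \<open>Density of the standard circularly-symmetric complex Gaussian CN(0,1)
  with respect to Lebesgue measure on the complex plane: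
  (1/pi) exp(-|z|^2), i.e. real and imaginary parts independent N(0,1/2).\<close>
definition cn01_density :: "complex \<Rightarrow> real" where
  "cn01_density z = exp (- (cmod z)\<^sup>2) / pi"

definition psi :: "'a measure \<Rightarrow> (nat \<Rightarrow> 'a \<Rightarrow> complex) \<Rightarrow> nat \<Rightarrow> real \<Rightarrow> real \<Rightarrow> real" where
  "psi M h l c x = (1 / x) *
     measure M {\<omega> \<in> space M. (\<Sum>i<l. (cmod (h i \<omega>))\<^sup>2) > real l * c / x}"

definition phi :: "nat \<Rightarrow> real \<Rightarrow> real" where
  "phi l y = y ^ l / fact (l - 1) - (\<Sum>i<l. y ^ i / fact i)"

end

theory Submission
  imports Defs "HOL-Analysis.Ball_Volume"
begin


lemma exp_tail: "ennreal (exp (-r)) = (\<integral>\<^sup>+s. ennreal (exp (-s)) * indicator {r..} s \<partial>lborel)"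
proof -
  have e1: "\<And>x. exp (-r - x) = exp (-r) * exp (-x)" by (simp add: exp_add[symmetric])
  have "(\<integral>\<^sup>+s. ennreal (exp (-s)) * indicator {r..} s \<partial>lborel)
     = ennreal \<bar>1\<bar> * (\<integral>\<^sup>+u. ennreal (exp (-(r + 1*u))) * indicator {r..} (r + 1*u) \<partial>lborel)"
    by (rule nn_integral_real_affine) auto
  also have "\<dots> = (\<integral>\<^sup>+u. ennreal (exp(-r)) * (ennreal (u^0 * exp (-u)) * indicator {0..} u) \<partial>lborel)"
    by (simp, intro nn_integral_cong) (auto simp: e1 ennreal_mult' split: split_indicator)
  also have "\<dots> = ennreal (exp(-r)) * (\<integral>\<^sup>+u. ennreal (u^0 * exp (-u)) * indicator {0..} u \<partial>lborel)"
    by (rule nn_integral_cmult) auto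
  also have "\<dots> = ennreal (exp (-r))"
    using nn_intergal_power_times_exp_Ici[of 0] by simp
  finally show ?thesis by simp
qed

lemma annulus_measure:
  assumes "0 \<le> a"
  shows "emeasure lborel {z::complex. a < (cmod z)^2 \<and> (cmod z)^2 \<le> s} = ennreal (pi * (s - a))"
proof (cases "s < a")
  case True
  then have e: "{z::complex. a < (cmod z)^2 \<and> (cmod z)^2 \<le> s} = {}" by auto
  have "pi * (s - a) \<le> 0" using True by (simp add: mult_nonneg_nonpos)
  then show ?thesis unfolding e by (simp add: ennreal_eq_0_iff)
next
  case False
  have sq: "\<And>x t. 0 \<le> t \<Longrightarrow> (cmod (x::complex) \<le> sqrt t) = ((cmod x)^2 \<le> t)"
    by (metis norm_ge_zero power_mono real_le_rsqrt real_sqrt_pow2)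
  have eq: "{z::complex. a < (cmod z)^2 \<and> (cmod z)^2 \<le> s} = cball 0 (sqrt s) - cball 0 (sqrt a)"
    using False assms by (auto simp: dist_norm sq)
  have uv: "unit_ball_vol 2 = pi" using unit_ball_vol_even[of 1] by simp
  have "emeasure lborel (cball (0::complex) (sqrt s) - cball 0 (sqrt a))
     = emeasure lborel (cball (0::complex) (sqrt s)) - emeasure lborel (cball (0::complex) (sqrt a))"
    by (rule emeasure_Diff) (use False assms in \<open>auto simp: emeasure_cball sq\<close>)
  also have "\<dots> = ennreal (pi * s) - ennreal (pi * a)"
    using False assms by (simp add: emeasure_cball uv)
  also have "\<dots> = ennreal (pi * (s - a))"
    using False assms by (subst ennreal_minus) (auto simp: algebra_simps)
  finally show ?thesis by (simp add: eq)
qed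

lemma exp_lin_integral:
  assumes "0 \<le> a"
  shows "(\<integral>\<^sup>+s. ennreal (exp (-s) * (pi * (s - a))) \<partial>lborel) = ennreal (pi * exp (-a))"
proof -
  have e1: "\<And>x. exp (-a - x) = exp (-a) * exp (-x)" by (simp add: exp_add[symmetric])
  have "(\<integral>\<^sup>+s. ennreal (exp (-s) * (pi * (s - a))) \<partial>lborel)
     = ennreal \<bar>1\<bar> * (\<integral>\<^sup>+u. ennreal (exp (-(a + 1*u)) * (pi * ((a + 1*u) - a))) \<partial>lborel)"
    by (rule nn_integral_real_affine) auto
  also have "\<dots> = (\<integral>\<^sup>+u. ennreal (pi * exp(-a)) * (ennreal (u^1 * exp (-u)) * indicator {0..} u) \<partial>lborel)"
  proof (simp, intro nn_integral_cong)
    fix u :: real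
    show "ennreal (exp (- a - u) * (pi * u)) = ennreal (pi * exp (- a)) * (ennreal (u * exp (- u)) * indicator {0..} u)"
    proof (cases "0 \<le> u")
      case True
      then show ?thesis by (simp add: e1 ennreal_mult'[symmetric] mult_ac)
    next
      case False
      then have "exp (- a - u) * (pi * u) \<le> 0" by (simp add: mult_nonneg_nonpos)
      then show ?thesis using False by (simp add: ennreal_eq_0_iff)
    qed
  qed
  also have "\<dots> = ennreal (pi * exp(-a)) * (\<integral>\<^sup>+u. ennreal (u^1 * exp (-u)) * indicator {0..} u \<partial>lborel)"
    by (rule nn_integral_cmult) auto
  also have "\<dots> = ennreal (pi * exp (-a))"
    using nn_intergal_power_times_exp_Ici[of 1] by simp
  finally show ?thesis .
qed

lemma cn01_tail:
  assumes a: "0 \<le> a"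
  shows "(\<integral>\<^sup>+z. ennreal (cn01_density z) * indicator {z. a < (cmod z)^2} z \<partial>lborel) = ennreal (exp (-a))"
proof -
  let ?A = "{z::complex. a < (cmod z)^2}"
  have pe: "\<And>t. ennreal (exp t / pi) = ennreal (1/pi) * ennreal (exp t)"
    by (subst ennreal_mult'[symmetric]) auto
  have "(\<integral>\<^sup>+z. ennreal (cn01_density z) * indicator ?A z \<partial>lborel)
      = (\<integral>\<^sup>+z. ennreal (1/pi) * (ennreal (exp (- ((cmod z)^2))) * indicator ?A z) \<partial>lborel)"
    by (intro nn_integral_cong) (simp add: cn01_density_def pe mult.assoc)
  also have "\<dots> = ennreal (1/pi) * (\<integral>\<^sup>+z. ennreal (exp (- ((cmod z)^2))) * indicator ?A z \<partial>lborel)"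
    by (rule nn_integral_cmult) simp
  also have "(\<integral>\<^sup>+z. ennreal (exp (- ((cmod z)^2))) * indicator ?A z \<partial>lborel)
     = (\<integral>\<^sup>+z. (\<integral>\<^sup>+s. ennreal (exp (-s)) * indicator {(cmod z)^2..} s * indicator ?A z \<partial>lborel) \<partial>lborel)"
  proof (intro nn_integral_cong)
    fix z :: complex
    have "ennreal (exp (- ((cmod z)^2))) = (\<integral>\<^sup>+s. ennreal (exp (-s)) * indicator {(cmod z)^2..} s \<partial>lborel)"
      by (rule exp_tail)
    then show "ennreal (exp (- ((cmod z)^2))) * indicator ?A z = (\<integral>\<^sup>+s. ennreal (exp (-s)) * indicator {(cmod z)^2..} s * indicator ?A z \<partial>lborel)"
      by (simp add: nn_integral_multc)
  qed
  also have "\<dots> = (\<integral>\<^sup>+s. (\<integral>\<^sup>+z. ennreal (exp (-s)) * indicator {(cmod z)^2..} s * indicator ?A z \<partial>lborel) \<partial>lborel)"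
  proof (rule lborel_pair.Fubini'[symmetric])
    have "(\<lambda>p::complex \<times> real. ennreal (exp (- snd p)) * (if (cmod (fst p))^2 \<le> snd p then 1 else 0) * (if a < (cmod (fst p))^2 then 1 else 0)) \<in> borel_measurable (lborel \<Otimes>\<^sub>M lborel)"
      by measurable
    then show "(\<lambda>(z::complex, s::real). ennreal (exp (-s)) * indicator {(cmod z)^2..} s * indicator ?A z) \<in> borel_measurable (lborel \<Otimes>\<^sub>M lborel)"
      by (simp add: indicator_def split_beta')
  qed
  also have "\<dots> = (\<integral>\<^sup>+s. ennreal (exp (-s) * (pi * (s - a))) \<partial>lborel)"
  proof (intro nn_integral_cong)
    fix s :: real
    have "(\<integral>\<^sup>+z. ennreal (exp (-s)) * indicator {(cmod z)^2..} s * indicator ?A z \<partial>lborel)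
       = (\<integral>\<^sup>+z. ennreal (exp (-s)) * indicator {z::complex. a < (cmod z)^2 \<and> (cmod z)^2 \<le> s} z \<partial>lborel)"
      by (intro nn_integral_cong) (auto split: split_indicator)
    also have "\<dots> = ennreal (exp (-s)) * emeasure lborel {z::complex. a < (cmod z)^2 \<and> (cmod z)^2 \<le> s}"
      by (rule nn_integral_cmult_indicator) measurable
    also have "\<dots> = ennreal (exp (-s) * (pi * (s - a)))"
      using a by (simp add: annulus_measure ennreal_mult')
    finally show "(\<integral>\<^sup>+z. ennreal (exp (-s)) * indicator {(cmod z)^2..} s * indicator ?A z \<partial>lborel) = ennreal (exp (-s) * (pi * (s - a)))" .
  qed
  also have "\<dots> = ennreal (pi * exp (-a))" by (rule exp_lin_integral[OF a])
  finally show ?thesis by (simp add: ennreal_mult[symmetric])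
qed



lemma phi_div:
  assumes "y > 0"
  shows "phi l y / y ^ l = 1 / fact (l - 1) - (\<Sum>i<l. 1 / (fact i * y ^ (l - i)))"
proof -
  have "(\<Sum>i<l. y ^ i / fact i) / y ^ l = (\<Sum>i<l. 1 / (fact i * y ^ (l - i)))"
    unfolding sum_divide_distrib
  proof (intro sum.cong refl)
    fix i assume "i \<in> {..<l}"
    then have "y ^ l = y ^ i * y ^ (l - i)" by (simp add: power_add[symmetric])
    then show "y ^ i / fact i / y ^ l = 1 / (fact i * y ^ (l - i))"
      using assms by (simp add: field_simps)
  qed
  then show ?thesis using assms unfolding phi_def by (simp add: diff_divide_distrib)
qed

lemma phi_q_mono:
  assumes "l \<ge> 1" "0 < u" "u < v"
  shows "phi l u / u ^ l < phi l v / v ^ l"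
proof -
  have "(\<Sum>i<l. 1 / (fact i * v ^ (l - i))) < (\<Sum>i<l. 1 / (fact i * u ^ (l - i)))"
  proof (rule sum_strict_mono)
    show "{..<l} \<noteq> {}" using assms by (simp add: lessThan_empty_iff)
    fix i assume "i \<in> {..<l}"
    then have "l - i \<noteq> 0" by auto
    then have "u ^ (l - i) < v ^ (l - i)" using assms by (intro power_strict_mono) auto
    moreover have "0 < u ^ (l - i)" using assms by simp
    ultimately show "1 / (fact i * v ^ (l - i)) < 1 / (fact i * u ^ (l - i))"
      by (intro divide_strict_left_mono mult_strict_left_mono) (auto intro: mult_pos_pos)
  qed simp
  then show ?thesis using assms by (simp add: phi_div)
qed

lemma phi_0: "l \<ge> 1 \<Longrightarrow> phi l 0 = -1"
proof -
  assume l: "l \<ge> 1"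
  have "(\<Sum>i<l. (0::real) ^ i / fact i) = (\<Sum>i<l. if i = 0 then 1 else 0)"
    by (intro sum.cong) auto
  also have "\<dots> = 1" using l by (simp add: sum.delta)
  finally show ?thesis using l unfolding phi_def by simp
qed

lemma phi_l_nonneg:
  assumes "l \<ge> 1"
  shows "phi l (real l) \<ge> 0"
proof -
  let ?a = "\<lambda>i. real l ^ i / fact i"
  have mono: "?a (l - 1 - k) \<le> ?a (l - 1)" for k
  proof (induction k)
    case (Suc k)
    show ?case
    proof (cases "Suc k \<le> l - 1")
      case True
      define j where "j = l - 1 - Suc k"
      have jk: "l - 1 - k = Suc j" using True unfolding j_def by simp
      have "?a j \<le> ?a (Suc j)"
      proof -
        have "real (Suc j) \<le> real l" using True jk assms by simp
        then have "?a j * 1 \<le> ?a j * (real l / real (Suc j))"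
          by (intro mult_left_mono) auto
        also have "\<dots> = ?a (Suc j)" by (simp add: field_simps)
        finally show ?thesis by simp
      qed
      then show ?thesis using Suc jk unfolding j_def by simp
    next
      case False
      then have "l - 1 - Suc k = l - 1 - k" by simp
      then show ?thesis using Suc by simp
    qed
  qed simp
  have "(\<Sum>i<l. ?a i) \<le> (\<Sum>i<l. ?a (l - 1))"
  proof (intro sum_mono)
    fix i assume "i \<in> {..<l}"
    then have "i = l - 1 - (l - 1 - i)" by auto
    then show "?a i \<le> ?a (l - 1)" using mono[of "l - 1 - i"] by simp
  qed
  also have "\<dots> = real l * (real l ^ (l - 1) / fact (l - 1))" by simp
  also have "\<dots> = real l ^ l / fact (l - 1)"
    using assms by (cases l) auto
  finally show ?thesis unfolding phi_def by simp
qed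

lemma continuous_phi: "continuous_on A (phi l)"
  unfolding phi_def by (intro continuous_intros) auto

lemma telescope:
  "(\<Sum>n<Suc k. real (Suc n) * t ^ n / fact n) - (\<Sum>n<Suc k. t ^ Suc n / fact n)
    = (\<Sum>n<Suc k. t ^ n / fact n) - t ^ Suc k / fact k"
proof (induction k)
  case (Suc k)
  have e: "real (Suc (Suc k)) * t ^ Suc k / fact (Suc k) - t ^ Suc k / fact k = t ^ Suc k / fact (Suc k)"
    by (simp add: field_simps del: of_nat_Suc fact_Suc) (simp add: fact_Suc algebra_simps)
  show ?case using Suc e by (simp add: algebra_simps)
qed simp

definition G :: "nat \<Rightarrow> real \<Rightarrow> real" where
  "G l t = exp (- t) * (\<Sum>n<l. t ^ Suc n / fact n)"

lemma G_deriv: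
  assumes "l \<ge> 1"
  shows "(G l has_real_derivative (- exp (- t) * phi l t)) (at t)"
proof -
  have "(G l has_real_derivative (- exp (- t) * (\<Sum>n<l. t ^ Suc n / fact n) + exp (- t) * (\<Sum>n<l. real (Suc n) * t ^ n / fact n))) (at t)"
  proof -
    have d: "((\<lambda>t. \<Sum>n<l. t ^ Suc n / fact n) has_real_derivative (\<Sum>n<l. real (Suc n) * t ^ n / fact n)) (at t)"
    proof (rule DERIV_sum)
      fix n
      have "((\<lambda>t. t ^ Suc n) has_real_derivative (1 + of_nat n) * (1 * t ^ n)) (at t)"
        by (rule DERIV_power_Suc) (rule DERIV_ident)
      from DERIV_cdivide[OF this, of "fact n"]
      show "((\<lambda>t. t ^ Suc n / fact n) has_real_derivative real (Suc n) * t ^ n / fact n) (at t)"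
        by simp
    qed
    have e: "((\<lambda>t. exp (- t)) has_real_derivative - exp (- t)) (at t)"
      by (auto intro!: derivative_eq_intros)
    show ?thesis unfolding G_def using DERIV_mult[OF e d] by (simp add: algebra_simps)
  qed
  moreover have "- exp (- t) * (\<Sum>n<l. t ^ Suc n / fact n) + exp (- t) * (\<Sum>n<l. real (Suc n) * t ^ n / fact n)
      = - exp (- t) * phi l t"
  proof -
    obtain k where k: "l = Suc k" using assms by (cases l) auto
    show ?thesis using telescope[where k=k and t=t] unfolding k phi_def by (simp add: algebra_simps)
  qed
  ultimately show ?thesis by simp
qed

lemma continuous_G: "continuous_on A (G l)"
  unfolding G_def by (intro continuous_intros) auto

lemma phi_root_exists:
  assumes "l \<ge> 1"
  shows "\<exists>y. 0 < y \<and> y \<le> real l \<and> phi l y = 0"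
proof -
  have "\<exists>y. 0 \<le> y \<and> y \<le> real l \<and> phi l y = 0"
    using assms phi_0[OF assms] phi_l_nonneg[OF assms]
    by (intro IVT' continuous_phi) auto
  then obtain y where "0 \<le> y" "y \<le> real l" "phi l y = 0" by auto
  moreover have "y \<noteq> 0" using \<open>phi l y = 0\<close> phi_0[OF assms] by auto
  ultimately show ?thesis by (intro exI[of _ y]) auto
qed

lemma phi_neg:
  assumes "l \<ge> 1" "0 < t" "t < y" "phi l y = 0"
  shows "phi l t < 0"
proof -
  have "phi l t / t ^ l < phi l y / y ^ l" by (rule phi_q_mono) (use assms in auto)
  then have "phi l t / t ^ l < 0" using assms by simp
  then show ?thesis using assms by (simp add: divide_less_0_iff)
qed

lemma phi_pos:
  assumes "l \<ge> 1" "0 < y" "y < t" "phi l y = 0"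
  shows "phi l t > 0"
proof -
  have "phi l y / y ^ l < phi l t / t ^ l" by (rule phi_q_mono) (use assms in auto)
  then have "0 < phi l t / t ^ l" using assms by simp
  then show ?thesis using assms by (simp add: zero_less_divide_iff)
qed

lemma G_incr:
  assumes "l \<ge> 1" "phi l y = 0" "0 < a" "a < b" "b \<le> y"
  shows "G l a < G l b"
proof (rule DERIV_pos_imp_increasing_open[OF \<open>a < b\<close> _ continuous_G])
  fix x assume "a < x" "x < b"
  then have "phi l x < 0" using assms by (intro phi_neg[of l x y]) auto
  then show "\<exists>d. (G l has_real_derivative d) (at x) \<and> d > 0"
    using G_deriv[OF assms(1), of x] by (intro exI[of _ "- exp (- x) * phi l x"]) (auto simp: mult_pos_neg)
qed

lemma G_decr:
  assumes "l \<ge> 1" "phi l y = 0" "0 < y" "y \<le> a" "a < b"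
  shows "G l a > G l b"
proof (rule DERIV_neg_imp_decreasing_open[OF \<open>a < b\<close> _ continuous_G])
  fix x assume "a < x" "x < b"
  then have "phi l x > 0" using assms by (intro phi_pos[of l y x]) auto
  then show "\<exists>d. (G l has_real_derivative d) (at x) \<and> d < 0"
    using G_deriv[OF assms(1), of x] by (intro exI[of _ "- exp (- x) * phi l x"]) auto
qed


lemma cn01_sq_exp:
  assumes P: "prob_space M" and D: "distributed M lborel H (\<lambda>z. ennreal (cn01_density z))"
  shows "distributed M lborel (\<lambda>\<omega>. (cmod (H \<omega>))^2) (exponential_density 1)"
proof -
  interpret prob_space M by fact
  have Hm[measurable]: "H \<in> borel_measurable M" using distributed_measurable[OF D] by simp
  have Xm: "(\<lambda>\<omega>. (cmod (H \<omega>))^2) \<in> borel_measurable M" by measurable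
  have "\<P>(\<omega> in M. (cmod (H \<omega>))^2 \<le> a) = 1 - exp (- a * 1)" if a: "0 \<le> a" for a
  proof -
    have gt: "prob {\<omega>\<in>space M. a < (cmod (H \<omega>))^2} = exp (- a)"
    proof -
      have "emeasure M {\<omega>\<in>space M. a < (cmod (H \<omega>))^2} = emeasure (distr M lborel H) {z. a < (cmod z)^2}"
        by (subst emeasure_distr) (auto intro!: arg_cong2[where f=emeasure])
      also have "\<dots> = emeasure (density lborel (\<lambda>z. ennreal (cn01_density z))) {z. a < (cmod z)^2}"
        unfolding distributed_distr_eq_density[OF D] ..
      also have "\<dots> = (\<integral>\<^sup>+z. ennreal (cn01_density z) * indicator {z. a < (cmod z)^2} z \<partial>lborel)"
        by (rule emeasure_density) (auto simp: cn01_density_def)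
      also have "\<dots> = ennreal (exp (- a))" by (rule cn01_tail[OF a])
      finally show ?thesis by (simp add: emeasure_eq_measure)
    qed
    have "prob {\<omega>\<in>space M. (cmod (H \<omega>))^2 \<le> a} = prob (space M - {\<omega>\<in>space M. a < (cmod (H \<omega>))^2})"
      by (intro arg_cong[where f=prob]) auto
    also have "\<dots> = 1 - prob {\<omega>\<in>space M. a < (cmod (H \<omega>))^2}" by (rule prob_compl) measurable
    finally show ?thesis using gt by simp
  qed
  then show ?thesis by (subst exponential_distributed_iff) (auto intro: Xm)
qed

lemma sum_tail:
  assumes P: "prob_space M" and l: "l \<ge> 1"
    and ind: "prob_space.indep_vars M (\<lambda>_. borel) h {..<l}"
    and D: "\<And>i. i < l \<Longrightarrow> distributed M lborel (h i) (\<lambda>z. ennreal (cn01_density z))"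
    and t: "0 \<le> t"
  shows "measure M {\<omega>\<in>space M. t < (\<Sum>i<l. (cmod (h i \<omega>))\<^sup>2)} = exp (- t) * (\<Sum>n<l. t ^ n / fact n)"
proof -
  interpret prob_space M by fact
  have Di: "distributed M lborel (\<lambda>\<omega>. (cmod (h i \<omega>))^2) (exponential_density 1)" if "i \<in> {..<l}" for i
    using that by (intro cn01_sq_exp[OF P] D) auto
  have ind2: "indep_vars (\<lambda>i. borel) (\<lambda>i \<omega>. (cmod (h i \<omega>))^2) {..<l}"
    by (rule indep_vars_compose2[OF ind]) measurable
  have S: "distributed M lborel (\<lambda>\<omega>. \<Sum>i\<in>{..<l}. (cmod (h i \<omega>))^2) (erlang_density (card {..<l::nat} - 1) 1)"
    by (rule exponential_distributed_sum) (use Di ind2 l in \<open>auto simp: lessThan_empty_iff\<close>)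
  obtain k where k: "l = Suc k" using l by (cases l) auto
  have "prob {\<omega>\<in>space M. t < (\<Sum>i<l. (cmod (h i \<omega>))\<^sup>2)} = 1 - erlang_CDF k 1 t"
    using erlang_distributed_gt[OF S _ t] k by simp
  also have "\<dots> = (\<Sum>n<l. t ^ n * exp (- t) / fact n)"
    using t unfolding erlang_CDF_def k lessThan_Suc_atMost by simp
  also have "\<dots> = exp (- t) * (\<Sum>n<l. t ^ n / fact n)"
    by (simp add: sum_distrib_left mult_ac)
  finally show ?thesis .
qed

lemma psi_G:
  assumes P: "prob_space M" and l: "l \<ge> 1" and c: "c > 0"
    and ind: "prob_space.indep_vars M (\<lambda>_. borel) h {..<l}"
    and D: "\<And>i. i < l \<Longrightarrow> distributed M lborel (h i) (\<lambda>z. ennreal (cn01_density z))"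
    and x: "x > 0"
  shows "psi M h l c x = G l (real l * c / x) / (real l * c)"
proof -
  define t where "t = real l * c / x"
  define E where "E = exp (- t) * (\<Sum>n<l. t ^ n / fact n)"
  have t: "0 \<le> t" using c x by (simp add: t_def)
  have "psi M h l c x = (1 / x) * E"
    unfolding psi_def E_def using sum_tail[OF P l ind D t] by (simp add: t_def)
  moreover have "G l t = t * E"
    unfolding G_def E_def by (simp add: sum_distrib_left mult_ac)
  moreover have "real l > 0" using l by simp
  ultimately show ?thesis using c x by (simp add: t_def)
qed

theorem mainTheorem6:
  fixes M :: "'a measure" and h :: "nat \<Rightarrow> 'a \<Rightarrow> complex" and l :: nat and c :: real
  assumes "prob_space M"
    and "l \<ge> 1" and "c > 0"
    and "prob_space.indep_vars M (\<lambda>_. borel) h {..<l}"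
    and "\<And>i. i < l \<Longrightarrow> distributed M lborel (h i) (\<lambda>z. ennreal (cn01_density z))"
  shows "(\<exists>!y. y > 0 \<and> phi l y = 0)
    \<and> (\<forall>y. y > 0 \<and> phi l y = 0 \<longrightarrow>
          y \<le> real l
        \<and> real l * c / y \<ge> c
        \<and> (\<forall>a b. 0 < a \<and> a < b \<and> b \<le> real l * c / y \<longrightarrow> psi M h l c a < psi M h l c b)
        \<and> (\<forall>a b. real l * c / y \<le> a \<and> a < b \<longrightarrow> psi M h l c b < psi M h l c a))"
proof (intro conjI allI impI)
  note l = \<open>l \<ge> 1\<close> and c = \<open>c > 0\<close>
  note pG = psi_G[OF assms(1,2,3,4,5)]
  have L: "real l > 0" using l by simp
  have lc: "real l * c > 0" using L c by simp
  obtain y0 where y0: "0 < y0" "y0 \<le> real l" "phi l y0 = 0" using phi_root_exists[OF l] by auto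
  show "\<exists>!y. y > 0 \<and> phi l y = 0"
  proof (rule ex1I[of _ y0])
    show "y0 > 0 \<and> phi l y0 = 0" using y0 by simp
    fix y assume y: "y > 0 \<and> phi l y = 0"
    show "y = y0"
    proof (rule linorder_cases[of y y0])
      assume "y < y0" then have "phi l y < 0" using y y0 by (intro phi_neg[OF l]) auto
      then show ?thesis using y by simp
    next
      assume "y0 < y" then have "phi l y > 0" using y y0 by (intro phi_pos[OF l, of y0]) auto
      then show ?thesis using y by simp
    qed
  qed
  fix y assume y: "y > 0 \<and> phi l y = 0"
  show yl: "y \<le> real l"
  proof (rule ccontr)
    assume "\<not> y \<le> real l"
    then have "phi l (real l) < 0" using y L by (intro phi_neg[OF l, of "real l" y]) auto
    then show False using phi_l_nonneg[OF l] by simp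
  qed
  show "real l * c / y \<ge> c" using y yl c by (simp add: le_divide_eq mult_left_mono mult.commute)
  show "psi M h l c a < psi M h l c b" if ab: "0 < a \<and> a < b \<and> b \<le> real l * c / y" for a b
  proof -
    have tb: "y \<le> real l * c / b" using ab y by (simp add: le_divide_eq field_simps)
    have tab: "real l * c / b < real l * c / a" using ab lc by (intro divide_strict_left_mono) auto
    have "G l (real l * c / a) < G l (real l * c / b)"
      using G_decr[OF l _ _ tb tab] y by simp
    then show ?thesis using ab pG lc by (simp add: divide_strict_right_mono)
  qed
  show "psi M h l c b < psi M h l c a" if ab: "real l * c / y \<le> a \<and> a < b" for a b
  proof -
    have a0: "a > 0" using ab lc y by (meson divide_pos_pos less_le_trans)
    have ta: "real l * c / a \<le> y" using ab y a0 by (simp add: divide_le_eq field_simps)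
    have tab: "real l * c / b < real l * c / a" using ab lc a0 by (intro divide_strict_left_mono) auto
    have tb0: "0 < real l * c / b" using lc ab a0 by simp
    have "G l (real l * c / b) < G l (real l * c / a)"
      using G_incr[OF l _ tb0 tab ta] y by simp
    then show ?thesis using ab a0 pG lc by (simp add: divide_strict_right_mono)
  qed
qed

end
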